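(* Let $\mathcal{C}$ be a $\beta$-avoiding simplicial complex that has an induced subcomplex isomorphic to $C_4$. Then the subcomplex of $\mathcal{C}$ induced on its non-ghost vertices is isomorphic to $\operatorname{cone}^p(C_4)$ for some $p\ge0$.
   Context: A simplicial complex on a finite ground set $V$ is a family of subsets of $V$ closed under subsets; a vertex $v\in V$ is a ghost vertex if $\{v\}\notin\mathcal{C}$, otherwise non-ghost. The induced subcomplex on $W\subseteq V$ is $\{F\in\mathcal{C}:F\subseteq W\}$ on $W$. $C_4$ is the complex on $\{1,2,3,4\}$ with facets $12,23,34,14$. $\operatorname{cone}^p(\mathcal{D})$ is the complex on the ground set of $\mathcal{D}$ together with $p$ new vertices $u_1,\dots,u_p$, with facets $F\cup\{u_1,\dots,u_p\}$ for $F$ a facet of $\mathcal{D}$ ($\operatorname{cone}^0(\mathcal{D})=\mathcal{D}$). For $S\subseteq V$, $\mathcal{C}\setminus S$ is the induced subcomplex on $V\setminus S$; for a face $R$, $\operatorname{link}_R(\mathcal{C})=\{F\setminus R: R\subseteq F\in\mathcal{C}\}$ on $V\setminus R$. A minor is $\operatorname{link}_R(\mathcal{C}\setminus S)$ with $S\cap R=\emptyset$, $R$ a face. $\mathcal{C}$ is $\beta$-avoiding if no minor is isomorphic to any of: $P_4$ (on $\{1,2,3,4\}$, facets $12,23,34$); $O_6$ (on $\{1,\dots,6\}$, faces the subsets containing none of $\{1,2\},\{3,4\},\{5,6\}$) or its Alexander dual $O_6^*$ (Alexander dual of $\mathcal{D}$ on $V$: $\{S\subseteq V: V\setminus S\notin\mathcal{D}\}$);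 $J_1$ (on $\{1,\dots,5\}$, facets $12,15,234,345$) or $J_1^*$ (facets $134,235,245$); $J_2$ (on $\{1,\dots,5\}$, facets $12,235,34,145$); $\partial\Delta_n\sqcup\{v\}$ for $n\ge1$ (all proper subsets of an $(n+1)$-set together with one extra isolated vertex). *)

theory Defs
  imports Main
begin

definition simplicial_complex :: "'a set \<Rightarrow> 'a set set \<Rightarrow> bool" where
  "simplicial_complex V C \<longleftrightarrow> finite V \<and> (\<forall>F\<in>C. F \<subseteq> V) \<and> (\<forall>F\<in>C. \<forall>G. G \<subseteq> F \<longrightarrow> G \<in> C)"

definition cx_iso :: "'a set \<Rightarrow> 'a set set \<Rightarrow> 'b set \<Rightarrow> 'b set set \<Rightarrow> bool" where
  "cx_iso V C W D \<longleftrightarrow> (\<exists>f. bij_betw f V W \<and> (\<forall>F. F \<subseteq> V \<longrightarrow> (F \<in> C \<longleftrightarrow> f ` F \<in> D)))"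

definition induced :: "'a set set \<Rightarrow> 'a set \<Rightarrow> 'a set set" where
  "induced C W = {F \<in> C. F \<subseteq> W}"

definition non_ghost :: "'a set \<Rightarrow> 'a set set \<Rightarrow> 'a set" where
  "non_ghost V C = {v \<in> V. {v} \<in> C}"

text \<open>Minor link_R (C \ S): ground set V - S - R, faces F - R for faces F of C
with F \<subseteq> V - S and R \<subseteq> F; R must be a face of C \ S, S and R disjoint.\<close>
definition is_minor :: "'a set \<Rightarrow> 'a set set \<Rightarrow> 'a set \<Rightarrow> 'a set set \<Rightarrow> bool" where
  "is_minor V C W D \<longleftrightarrow> (\<exists>S R. S \<subseteq> V \<and> R \<subseteq> V - S \<and> R \<in> C \<and>
      W = V - S - R \<and> D = {F - R | F. F \<in> C \<and> F \<subseteq> V - S \<and> R \<subseteq> F})"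

definition gen :: "nat set set \<Rightarrow> nat set set" where
  "gen Fs = {G. \<exists>F\<in>Fs. G \<subseteq> F}"

definition alex_dual :: "'a set \<Rightarrow> 'a set set \<Rightarrow> 'a set set" where
  "alex_dual V D = {S. S \<subseteq> V \<and> V - S \<notin> D}"

definition P4 :: "nat set set" where "P4 = gen {{1,2},{2,3},{3,4}}"
definition C4 :: "nat set set" where "C4 = gen {{1,2},{2,3},{3,4},{1,4}}"
definition O6 :: "nat set set" where
  "O6 = {F. F \<subseteq> {1..6} \<and> \<not> {1,2} \<subseteq> F \<and> \<not> {3,4} \<subseteq> F \<and> \<not> {5,6} \<subseteq> F}"
definition J1 :: "nat set set" where "J1 = gen {{1,2},{1,5},{2,3,4},{3,4,5}}"
definition J1s :: "nat set set" where "J1s = gen {{1,3,4},{2,3,5},{2,4,5}}"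
definition J2 :: "nat set set" where "J2 = gen {{1,2},{2,3,5},{3,4},{1,4,5}}"

text \<open>\<partial>\<Delta>_n \<sqcup> {v}: proper subsets of {0..n} plus isolated vertex n+1, ground set {0..n+1}.\<close>
definition bdry_plus_pt :: "nat \<Rightarrow> nat set set" where
  "bdry_plus_pt n = {F. F \<subset> {0..n}} \<union> {{n+1}}"

text \<open>cone^p(C4) on ground set {1..4+p}, new vertices 5..4+p.\<close>
definition cone_C4 :: "nat \<Rightarrow> nat set set" where
  "cone_C4 p = gen {F \<union> {5..4+p} | F. F \<in> {{1,2},{2,3},{3,4},{1,4}}}"

definition beta_avoiding :: "'a set \<Rightarrow> 'a set set \<Rightarrow> bool" where
  "beta_avoiding V C \<longleftrightarrow> (\<forall>W D. is_minor V C W D \<longrightarrow>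
      \<not> cx_iso W D {1..4} P4 \<and>
      \<not> cx_iso W D {1..6} O6 \<and>
      \<not> cx_iso W D {1..6} (alex_dual {1..6} O6) \<and>
      \<not> cx_iso W D {1..5} J1 \<and>
      \<not> cx_iso W D {1..5} J1s \<and>
      \<not> cx_iso W D {1..5} J2 \<and>
      (\<forall>n\<ge>1. \<not> cx_iso W D {0..n+1} (bdry_plus_pt n)))"

end

theory Submission
  imports Defs
begin


lemma I4: "{1..4::nat} = {1,2,3,4}" by auto
lemma I5: "{1..5::nat} = {1,2,3,4,5}" by auto
lemma I6: "{1..6::nat} = {1,2,3,4,5,6}" by auto
lemma I2: "{0..2::nat} = {0,1,2}" by auto
lemma I01: "{0..1::nat} = {0,1}" by auto

lemma P4_up: "G \<subseteq> {1..4} \<Longrightarrow> G \<in> P4 \<longleftrightarrow> (\<exists>\<phi>\<in>{{1,2},{2,3},{3,4::nat}}. G \<subseteq> \<phi>)"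
  unfolding P4_def gen_def by auto
lemma P4_down: "G \<subseteq> {1..4} \<Longrightarrow> G \<notin> P4 \<Longrightarrow> (\<exists>\<nu>\<in>{{1,3},{1,4},{2,4::nat}}. \<nu> \<subseteq> G)"
  unfolding P4_def gen_def I4
  by (cases "1\<in>G"; cases "2\<in>G"; cases "3\<in>G"; cases "4\<in>G"; auto simp: subset_iff)

lemma J1_up: "G \<subseteq> {1..5} \<Longrightarrow> G \<in> J1 \<longleftrightarrow> (\<exists>\<phi>\<in>{{1,2},{1,5},{2,3,4},{3,4,5::nat}}. G \<subseteq> \<phi>)"
  unfolding J1_def gen_def by auto
lemma J1_down: "G \<subseteq> {1..5} \<Longrightarrow> G \<notin> J1 \<Longrightarrow> (\<exists>\<nu>\<in>{{1,3},{1,4},{2,5::nat}}. \<nu> \<subseteq> G)"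
  unfolding J1_def gen_def I5
  by (cases "1\<in>G"; cases "2\<in>G"; cases "3\<in>G"; cases "4\<in>G"; cases "5\<in>G"; auto simp: subset_iff)

lemma J2_up: "G \<subseteq> {1..5} \<Longrightarrow> G \<in> J2 \<longleftrightarrow> (\<exists>\<phi>\<in>{{1,2},{2,3,5},{3,4},{1,4,5::nat}}. G \<subseteq> \<phi>)"
  unfolding J2_def gen_def by auto
lemma J2_down: "G \<subseteq> {1..5} \<Longrightarrow> G \<notin> J2 \<Longrightarrow> (\<exists>\<nu>\<in>{{1,3},{2,4},{1,2,5},{3,4,5::nat}}. \<nu> \<subseteq> G)"
  unfolding J2_def gen_def I5
  by (cases "1\<in>G"; cases "2\<in>G"; cases "3\<in>G"; cases "4\<in>G"; cases "5\<in>G"; auto simp: subset_iff)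

definition O6Phi :: "nat set set" where
  "O6Phi = {{a,b,c} | a b c. a \<in> {1,2} \<and> b \<in> {3,4} \<and> c \<in> {5,6}}"

lemma O6_up: assumes G: "G \<subseteq> {1..6}"
  shows "G \<in> O6 \<longleftrightarrow> (\<exists>\<phi>\<in>O6Phi. G \<subseteq> \<phi>)"
proof
  assume h: "G \<in> O6"
  have G6: "G \<subseteq> {1,2,3,4,5,6}" using G I6 by simp
  have np: "\<not> {1,2} \<subseteq> G" "\<not> {3,4} \<subseteq> G" "\<not> {5,6} \<subseteq> G" using h unfolding O6_def by auto
  define a where "a = (if 1 \<in> G then 1 else (2::nat))"
  define b where "b = (if 3 \<in> G then 3 else (4::nat))"
  define c where "c = (if 5 \<in> G then 5 else (6::nat))"
  have a: "a \<in> {1,2}" "\<And>x. x \<in> G \<Longrightarrow> x \<in> {1,2} \<Longrightarrow> x = a" unfolding a_def using np(1) by auto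
  have b: "b \<in> {3,4}" "\<And>x. x \<in> G \<Longrightarrow> x \<in> {3,4} \<Longrightarrow> x = b" unfolding b_def using np(2) by auto
  have c: "c \<in> {5,6}" "\<And>x. x \<in> G \<Longrightarrow> x \<in> {5,6} \<Longrightarrow> x = c" unfolding c_def using np(3) by auto
  have "G \<subseteq> {a,b,c}"
  proof
    fix x assume x: "x \<in> G"
    then have "x \<in> {1,2} \<or> x \<in> {3,4} \<or> x \<in> {5,6}" using G6 by blast
    then show "x \<in> {a,b,c}" using a(2)[OF x] b(2)[OF x] c(2)[OF x] by blast
  qed
  moreover have "{a,b,c} \<in> O6Phi" unfolding O6Phi_def using a(1) b(1) c(1) by blast
  ultimately show "\<exists>\<phi>\<in>O6Phi. G \<subseteq> \<phi>" by blast
next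
  assume "\<exists>\<phi>\<in>O6Phi. G \<subseteq> \<phi>"
  then obtain a b c where abc: "a \<in> {1,2}" "b \<in> {3,4}" "c \<in> {5,6}" "G \<subseteq> {a,b,c}"
    unfolding O6Phi_def by blast
  have "\<not> {1,2} \<subseteq> {a,b,c}" "\<not> {3,4} \<subseteq> {a,b,c}" "\<not> {5,6} \<subseteq> {a,b,c}"
    using abc(1-3) by auto
  then show "G \<in> O6" unfolding O6_def using G abc(4) by blast
qed
lemma O6_down: "G \<subseteq> {1..6} \<Longrightarrow> G \<notin> O6 \<Longrightarrow> (\<exists>\<nu>\<in>{{1,2},{3,4},{5,6::nat}}. \<nu> \<subseteq> G)"
  unfolding O6_def by auto



lemma bd1_abs:
  assumes "p \<noteq> q" "p \<noteq> r" "q \<noteq> r" "G \<subseteq> {p,q,r}"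
  shows "(G \<subset> {p,q} \<or> G = {r}) \<longleftrightarrow> (G \<subseteq> {p} \<or> G \<subseteq> {q} \<or> G \<subseteq> {r})"
    and "(G \<subseteq> {p} \<or> G \<subseteq> {q} \<or> G \<subseteq> {r}) \<or> {p,q} \<subseteq> G \<or> {p,r} \<subseteq> G \<or> {q,r} \<subseteq> G"
  using assms by blast+

lemma bd1_mem: "G \<in> bdry_plus_pt 1 \<longleftrightarrow> (G \<subset> {0,1} \<or> G = {2})"
  by (simp only: bdry_plus_pt_def I01 mem_Collect_eq Un_iff singleton_iff one_add_one)

lemma bd1_bex: "(\<exists>\<phi>\<in>{{0},{1},{2::nat}}. G \<subseteq> \<phi>) \<longleftrightarrow> (G \<subseteq> {0} \<or> G \<subseteq> {1} \<or> G \<subseteq> {2})" by (simp only: bex_simps simp_thms)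
lemma bd1_bex2: "(\<exists>\<nu>\<in>{{0,1},{0,2},{1,2::nat}}. \<nu> \<subseteq> G) \<longleftrightarrow> ({0,1} \<subseteq> G \<or> {0,2} \<subseteq> G \<or> {1,2} \<subseteq> G)" by (simp only: bex_simps simp_thms)
lemma n012: "(0::nat) \<noteq> 1" "(0::nat) \<noteq> 2" "(1::nat) \<noteq> 2" by simp_all

lemma bd1_up:
  assumes G: "G \<subseteq> {0..2}"
  shows "G \<in> bdry_plus_pt 1 \<longleftrightarrow> (\<exists>\<phi>\<in>{{0},{1},{2::nat}}. G \<subseteq> \<phi>)"
proof -
  have G3: "G \<subseteq> {0,1,2}" using G I2 by simp
  show ?thesis unfolding bd1_mem bd1_bex by (rule bd1_abs(1)[OF n012 G3])
qed

lemma bd1_down: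
  assumes G: "G \<subseteq> {0..2}" and nG: "G \<notin> bdry_plus_pt 1"
  shows "\<exists>\<nu>\<in>{{0,1},{0,2},{1,2::nat}}. \<nu> \<subseteq> G"
proof -
  have G3: "G \<subseteq> {0,1,2}" using G I2 by simp
  have "\<not> (G \<subseteq> {0} \<or> G \<subseteq> {1} \<or> G \<subseteq> {2})" using nG unfolding bd1_up[OF G] bd1_bex .
  then show ?thesis unfolding bd1_bex2 using bd1_abs(2)[OF n012 G3] by blast
qed




lemma sc_closed: "simplicial_complex V C \<Longrightarrow> F \<in> C \<Longrightarrow> G \<subseteq> F \<Longrightarrow> G \<in> C"
  unfolding simplicial_complex_def by blast

lemma sc_sub: "simplicial_complex V C \<Longrightarrow> F \<in> C \<Longrightarrow> F \<subseteq> V"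
  unfolding simplicial_complex_def by blast

lemma minor_iso:
  assumes sc: "simplicial_complex V C" and R: "R \<in> C" and inj: "inj_on g I"
    and gI: "g ` I \<subseteq> V - R"
    and H: "\<And>G. G \<subseteq> I \<Longrightarrow> (g ` G \<union> R \<in> C \<longleftrightarrow> G \<in> T)"
  shows "\<exists>W D. is_minor V C W D \<and> cx_iso W D I T"
proof -
  define S where "S = V - R - g ` I"
  define D where "D = {F - R | F. F \<in> C \<and> F \<subseteq> V - S \<and> R \<subseteq> F}"
  have RV: "R \<subseteq> V" using sc_sub[OF sc R] .
  have W: "g ` I = V - S - R" using gI RV unfolding S_def by blast
  have SV: "S \<subseteq> V" "R \<subseteq> V - S" using RV unfolding S_def by auto
  have min: "is_minor V C (g ` I) D"
    unfolding is_minor_def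
    apply (rule exI[of _ S], rule exI[of _ R])
    using SV R W by (simp add: D_def)
  define f where "f = the_inv_into I g"
  have bij: "bij_betw f (g ` I) I" unfolding f_def using inj by (simp add: bij_betw_the_inv_into inj_on_imp_bij_betw)
  have "\<forall>F. F \<subseteq> g ` I \<longrightarrow> (F \<in> D \<longleftrightarrow> f ` F \<in> T)"
  proof (intro allI impI)
    fix F assume F: "F \<subseteq> g ` I"
    have G: "f ` F \<subseteq> I" using image_mono[OF F, of f] bij_betw_imp_surj_on[OF bij] by simp
    have gfx: "\<And>x. x \<in> F \<Longrightarrow> g (f x) = x" using F inj unfolding f_def
        by (meson f_the_inv_into_f subsetD)
    have gf: "g ` (f ` F) = F"
      unfolding image_image using gfx by simp
    have FR: "F \<inter> R = {}" using F gI by blast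
    have "F \<in> D \<longleftrightarrow> F \<union> R \<in> C"
    proof
      assume "F \<in> D"
      then obtain F' where F': "F = F' - R" "F' \<in> C" "R \<subseteq> F'" unfolding D_def by blast
      then have "F \<union> R = F'" by blast
      then show "F \<union> R \<in> C" using F' by simp
    next
      assume h: "F \<union> R \<in> C"
      have "F \<union> R \<subseteq> V - S" using F RV gI unfolding S_def by blast
      moreover have "(F \<union> R) - R = F" using FR by blast
      ultimately show "F \<in> D" unfolding D_def using h by blast
    qed
    also have "\<dots> \<longleftrightarrow> f ` F \<in> T" using H[OF G] gf by simp
    finally show "F \<in> D \<longleftrightarrow> f ` F \<in> T" .
  qed
  then have "cx_iso (g ` I) D I T" unfolding cx_iso_def using bij by blast
  with min show ?thesis by blast
qed

lemma H_from:
  assumes sc: "simplicial_complex V C"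
    and fac: "\<And>\<phi>. \<phi> \<in> Phi \<Longrightarrow> g ` \<phi> \<union> R \<in> C"
    and non: "\<And>\<nu>. \<nu> \<in> N \<Longrightarrow> g ` \<nu> \<union> R \<notin> C"
    and up: "\<And>G. G \<subseteq> I \<Longrightarrow> G \<in> T \<longleftrightarrow> (\<exists>\<phi>\<in>Phi. G \<subseteq> \<phi>)"
    and down: "\<And>G. G \<subseteq> I \<Longrightarrow> G \<notin> T \<Longrightarrow> \<exists>\<nu>\<in>N. \<nu> \<subseteq> G"
    and G: "G \<subseteq> I"
  shows "g ` G \<union> R \<in> C \<longleftrightarrow> G \<in> T"
proof
  assume h: "g ` G \<union> R \<in> C"
  show "G \<in> T"
  proof (rule ccontr)
    assume "G \<notin> T"
    then obtain \<nu> where "\<nu> \<in> N" "\<nu> \<subseteq> G" using down[OF G] by blast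
    then have "g ` \<nu> \<union> R \<subseteq> g ` G \<union> R" by (meson Un_mono image_mono order_refl)
    then have "g ` \<nu> \<union> R \<in> C" by (rule sc_closed[OF sc h])
    with non[OF \<open>\<nu> \<in> N\<close>] show False by simp
  qed
next
  assume "G \<in> T"
  then obtain \<phi> where "\<phi> \<in> Phi" "G \<subseteq> \<phi>" using up[OF G] by blast
  then have "g ` G \<union> R \<subseteq> g ` \<phi> \<union> R" by (meson Un_mono image_mono order_refl)
  then show "g ` G \<union> R \<in> C" by (rule sc_closed[OF sc fac[OF \<open>\<phi> \<in> Phi\<close>]])
qed

lemma no_gen:
  assumes sc: "simplicial_complex V C" and R: "R \<in> C" and inj: "inj_on g I"
    and gI: "g ` I \<subseteq> V - R"
    and fac: "\<And>\<phi>. \<phi> \<in> Phi \<Longrightarrow> g ` \<phi> \<union> R \<in> C"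
    and non: "\<And>\<nu>. \<nu> \<in> N \<Longrightarrow> g ` \<nu> \<union> R \<notin> C"
    and up: "\<And>G. G \<subseteq> I \<Longrightarrow> G \<in> T \<longleftrightarrow> (\<exists>\<phi>\<in>Phi. G \<subseteq> \<phi>)"
    and down: "\<And>G. G \<subseteq> I \<Longrightarrow> G \<notin> T \<Longrightarrow> \<exists>\<nu>\<in>N. \<nu> \<subseteq> G"
  shows "\<exists>W D. is_minor V C W D \<and> cx_iso W D I T"
  by (rule minor_iso[OF sc R inj gI]) (rule H_from[OF sc fac non up down])

lemma no_bd1:
  assumes sc: "simplicial_complex V C" and ba: "beta_avoiding V C" and R: "R \<in> C"
    and d: "distinct [x0,x1,x2]" and V: "{x0,x1,x2} \<subseteq> V - R"
    and f: "{x0} \<union> R \<in> C" "{x1} \<union> R \<in> C" "{x2} \<union> R \<in> C"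
    and n: "{x0,x1} \<union> R \<notin> C" "{x0,x2} \<union> R \<notin> C" "{x1,x2} \<union> R \<notin> C"
  shows False
proof -
  define g where "g = (\<lambda>i::nat. if i=0 then x0 else if i=1 then x1 else x2)"
  have inj: "inj_on g {0..2::nat}" unfolding I2 inj_on_def g_def using d by auto
  have gI: "g ` {0..2::nat} \<subseteq> V - R" unfolding I2 g_def using V by auto
  have "\<exists>W D. is_minor V C W D \<and> cx_iso W D {0..2::nat} (bdry_plus_pt 1)"
  proof (rule no_gen[OF sc R inj gI, where Phi="{{0},{1},{2::nat}}" and N="{{0,1},{0,2},{1,2::nat}}"])
    fix \<phi> assume "\<phi> \<in> {{0},{1},{2::nat}}"
    then show "g ` \<phi> \<union> R \<in> C" using f by (elim insertE emptyE) (simp_all add: g_def insert_commute)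
  next
    fix \<nu> assume "\<nu> \<in> {{0,1},{0,2},{1,2::nat}}"
    then show "g ` \<nu> \<union> R \<notin> C" using n by (elim insertE emptyE) (simp_all add: g_def insert_commute)
  next
    fix G assume "G \<subseteq> {0..2::nat}" then show "G \<in> bdry_plus_pt 1 \<longleftrightarrow> (\<exists>\<phi>\<in>{{0},{1},{2::nat}}. G \<subseteq> \<phi>)" by (rule bd1_up)
  next
    fix G assume "G \<subseteq> {0..2::nat}" "G \<notin> bdry_plus_pt 1" then show "\<exists>\<nu>\<in>{{0,1},{0,2},{1,2::nat}}. \<nu> \<subseteq> G" by (rule bd1_down)
  qed
  then obtain W D where m: "is_minor V C W D" and i: "cx_iso W D {0..2::nat} (bdry_plus_pt 1)" by blast
  have "\<not> cx_iso W D {0..1+1} (bdry_plus_pt 1)" using ba m unfolding beta_avoiding_def by blast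
  then have "\<not> cx_iso W D {0..2} (bdry_plus_pt 1)" by (simp only: one_add_one simp_thms)
  with i show False by blast
qed

lemma no_P4:
  assumes sc: "simplicial_complex V C" and ba: "beta_avoiding V C" and R: "R \<in> C"
    and d: "distinct [x1,x2,x3,x4]" and V: "{x1,x2,x3,x4} \<subseteq> V - R"
    and f: "{x1,x2} \<union> R \<in> C" "{x2,x3} \<union> R \<in> C" "{x3,x4} \<union> R \<in> C"
    and n: "{x1,x3} \<union> R \<notin> C" "{x1,x4} \<union> R \<notin> C" "{x2,x4} \<union> R \<notin> C"
  shows False
proof -
  define g where "g = (\<lambda>i::nat. if i=1 then x1 else if i=2 then x2 else if i=3 then x3 else x4)"
  have inj: "inj_on g {1..4::nat}" unfolding I4 inj_on_def g_def using d by auto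
  have gI: "g ` {1..4::nat} \<subseteq> V - R" unfolding I4 g_def using V by auto
  have "\<exists>W D. is_minor V C W D \<and> cx_iso W D {1..4::nat} (P4)"
  proof (rule no_gen[OF sc R inj gI, where Phi="{{1,2},{2,3},{3,4::nat}}" and N="{{1,3},{1,4},{2,4::nat}}"])
    fix \<phi> assume "\<phi> \<in> {{1,2},{2,3},{3,4::nat}}"
    then show "g ` \<phi> \<union> R \<in> C" using f by (elim insertE emptyE) (simp_all add: g_def insert_commute)
  next
    fix \<nu> assume "\<nu> \<in> {{1,3},{1,4},{2,4::nat}}"
    then show "g ` \<nu> \<union> R \<notin> C" using n by (elim insertE emptyE) (simp_all add: g_def insert_commute)
  next
    fix G assume "G \<subseteq> {1..4::nat}" then show "G \<in> P4 \<longleftrightarrow> (\<exists>\<phi>\<in>{{1,2},{2,3},{3,4::nat}}. G \<subseteq> \<phi>)" by (rule P4_up)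
  next
    fix G assume "G \<subseteq> {1..4::nat}" "G \<notin> P4" then show "\<exists>\<nu>\<in>{{1,3},{1,4},{2,4::nat}}. \<nu> \<subseteq> G" by (rule P4_down)
  qed
  then obtain W D where m: "is_minor V C W D" and i: "cx_iso W D {1..4::nat} (P4)" by blast
  have "\<not> cx_iso W D {1..4} P4" using ba m unfolding beta_avoiding_def by blast
  with i show False by blast
qed

lemma no_J1:
  assumes sc: "simplicial_complex V C" and ba: "beta_avoiding V C" and R: "R \<in> C"
    and d: "distinct [x1,x2,x3,x4,x5]" and V: "{x1,x2,x3,x4,x5} \<subseteq> V - R"
    and f: "{x1,x2} \<union> R \<in> C" "{x1,x5} \<union> R \<in> C" "{x2,x3,x4} \<union> R \<in> C" "{x3,x4,x5} \<union> R \<in> C"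
    and n: "{x1,x3} \<union> R \<notin> C" "{x1,x4} \<union> R \<notin> C" "{x2,x5} \<union> R \<notin> C"
  shows False
proof -
  define g where "g = (\<lambda>i::nat. if i=1 then x1 else if i=2 then x2 else if i=3 then x3 else if i=4 then x4 else x5)"
  have inj: "inj_on g {1..5::nat}" unfolding I5 inj_on_def g_def using d by auto
  have gI: "g ` {1..5::nat} \<subseteq> V - R" unfolding I5 g_def using V by auto
  have "\<exists>W D. is_minor V C W D \<and> cx_iso W D {1..5::nat} (J1)"
  proof (rule no_gen[OF sc R inj gI, where Phi="{{1,2},{1,5},{2,3,4},{3,4,5::nat}}" and N="{{1,3},{1,4},{2,5::nat}}"])
    fix \<phi> assume "\<phi> \<in> {{1,2},{1,5},{2,3,4},{3,4,5::nat}}"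
    then show "g ` \<phi> \<union> R \<in> C" using f by (elim insertE emptyE) (simp_all add: g_def insert_commute)
  next
    fix \<nu> assume "\<nu> \<in> {{1,3},{1,4},{2,5::nat}}"
    then show "g ` \<nu> \<union> R \<notin> C" using n by (elim insertE emptyE) (simp_all add: g_def insert_commute)
  next
    fix G assume "G \<subseteq> {1..5::nat}" then show "G \<in> J1 \<longleftrightarrow> (\<exists>\<phi>\<in>{{1,2},{1,5},{2,3,4},{3,4,5::nat}}. G \<subseteq> \<phi>)" by (rule J1_up)
  next
    fix G assume "G \<subseteq> {1..5::nat}" "G \<notin> J1" then show "\<exists>\<nu>\<in>{{1,3},{1,4},{2,5::nat}}. \<nu> \<subseteq> G" by (rule J1_down)
  qed
  then obtain W D where m: "is_minor V C W D" and i: "cx_iso W D {1..5::nat} (J1)" by blast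
  have "\<not> cx_iso W D {1..5} J1" using ba m unfolding beta_avoiding_def by blast
  with i show False by blast
qed

lemma no_J2:
  assumes sc: "simplicial_complex V C" and ba: "beta_avoiding V C" and R: "R \<in> C"
    and d: "distinct [x1,x2,x3,x4,x5]" and V: "{x1,x2,x3,x4,x5} \<subseteq> V - R"
    and f: "{x1,x2} \<union> R \<in> C" "{x2,x3,x5} \<union> R \<in> C" "{x3,x4} \<union> R \<in> C" "{x1,x4,x5} \<union> R \<in> C"
    and n: "{x1,x3} \<union> R \<notin> C" "{x2,x4} \<union> R \<notin> C" "{x1,x2,x5} \<union> R \<notin> C" "{x3,x4,x5} \<union> R \<notin> C"
  shows False
proof -
  define g where "g = (\<lambda>i::nat. if i=1 then x1 else if i=2 then x2 else if i=3 then x3 else if i=4 then x4 else x5)"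
  have inj: "inj_on g {1..5::nat}" unfolding I5 inj_on_def g_def using d by auto
  have gI: "g ` {1..5::nat} \<subseteq> V - R" unfolding I5 g_def using V by auto
  have "\<exists>W D. is_minor V C W D \<and> cx_iso W D {1..5::nat} (J2)"
  proof (rule no_gen[OF sc R inj gI, where Phi="{{1,2},{2,3,5},{3,4},{1,4,5::nat}}" and N="{{1,3},{2,4},{1,2,5},{3,4,5::nat}}"])
    fix \<phi> assume "\<phi> \<in> {{1,2},{2,3,5},{3,4},{1,4,5::nat}}"
    then show "g ` \<phi> \<union> R \<in> C" using f by (elim insertE emptyE) (simp_all add: g_def insert_commute)
  next
    fix \<nu> assume "\<nu> \<in> {{1,3},{2,4},{1,2,5},{3,4,5::nat}}"
    then show "g ` \<nu> \<union> R \<notin> C" using n by (elim insertE emptyE) (simp_all add: g_def insert_commute)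
  next
    fix G assume "G \<subseteq> {1..5::nat}" then show "G \<in> J2 \<longleftrightarrow> (\<exists>\<phi>\<in>{{1,2},{2,3,5},{3,4},{1,4,5::nat}}. G \<subseteq> \<phi>)" by (rule J2_up)
  next
    fix G assume "G \<subseteq> {1..5::nat}" "G \<notin> J2" then show "\<exists>\<nu>\<in>{{1,3},{2,4},{1,2,5},{3,4,5::nat}}. \<nu> \<subseteq> G" by (rule J2_down)
  qed
  then obtain W D where m: "is_minor V C W D" and i: "cx_iso W D {1..5::nat} (J2)" by blast
  have "\<not> cx_iso W D {1..5} J2" using ba m unfolding beta_avoiding_def by blast
  with i show False by blast
qed

lemma no_O6:
  assumes sc: "simplicial_complex V C" and ba: "beta_avoiding V C" and R: "R \<in> C"
    and d: "distinct [x1,x2,x3,x4,x5,x6]" and V: "{x1,x2,x3,x4,x5,x6} \<subseteq> V - R"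
    and f: "{x1,x3,x5} \<union> R \<in> C" "{x1,x3,x6} \<union> R \<in> C" "{x1,x4,x5} \<union> R \<in> C" "{x1,x4,x6} \<union> R \<in> C" "{x2,x3,x5} \<union> R \<in> C" "{x2,x3,x6} \<union> R \<in> C" "{x2,x4,x5} \<union> R \<in> C" "{x2,x4,x6} \<union> R \<in> C"
    and n: "{x1,x2} \<union> R \<notin> C" "{x3,x4} \<union> R \<notin> C" "{x5,x6} \<union> R \<notin> C"
  shows False
proof -
  define g where "g = (\<lambda>i::nat. if i=1 then x1 else if i=2 then x2 else if i=3 then x3 else if i=4 then x4 else if i=5 then x5 else x6)"
  have inj: "inj_on g {1..6::nat}" unfolding I6 inj_on_def g_def using d by auto
  have gI: "g ` {1..6::nat} \<subseteq> V - R" unfolding I6 g_def using V by auto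
  have "\<exists>W D. is_minor V C W D \<and> cx_iso W D {1..6::nat} (O6)"
  proof (rule no_gen[OF sc R inj gI, where Phi="O6Phi" and N="{{1,2},{3,4},{5,6::nat}}"])
    fix \<phi> assume "\<phi> \<in> O6Phi"
    then obtain a b c where "\<phi> = {a,b,c}" and abc: "a \<in> {1,2}" "b \<in> {3,4}" "c \<in> {5,6::nat}" unfolding O6Phi_def by blast
    from abc show "g ` \<phi> \<union> R \<in> C" using f unfolding \<open>\<phi> = {a,b,c}\<close> by (elim insertE emptyE) (simp_all add: g_def insert_commute)
  next
    fix \<nu> assume "\<nu> \<in> {{1,2},{3,4},{5,6::nat}}"
    then show "g ` \<nu> \<union> R \<notin> C" using n by (elim insertE emptyE) (simp_all add: g_def insert_commute)
  next
    fix G assume "G \<subseteq> {1..6::nat}" then show "G \<in> O6 \<longleftrightarrow> (\<exists>\<phi>\<in>O6Phi. G \<subseteq> \<phi>)" by (rule O6_up)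
  next
    fix G assume "G \<subseteq> {1..6::nat}" "G \<notin> O6" then show "\<exists>\<nu>\<in>{{1,2},{3,4},{5,6::nat}}. \<nu> \<subseteq> G" by (rule O6_down)
  qed
  then obtain W D where m: "is_minor V C W D" and i: "cx_iso W D {1..6::nat} (O6)" by blast
  have "\<not> cx_iso W D {1..6} O6" using ba m unfolding beta_avoiding_def by blast
  with i show False by blast
qed




locale sq =
  fixes V :: "'a set" and C :: "'a set set" and R :: "'a set" and a b c d u :: 'a
  assumes sc: "simplicial_complex V C" and ba: "beta_avoiding V C" and R: "R \<in> C"
    and dist: "distinct [a,b,c,d,u]" and inV: "{a,b,c,d,u} \<subseteq> V - R"
    and eab: "{a,b} \<union> R \<in> C" and ebc: "{b,c} \<union> R \<in> C"
    and ecd: "{c,d} \<union> R \<in> C" and eda: "{d,a} \<union> R \<in> C"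
    and nac: "{a,c} \<union> R \<notin> C" and nbd: "{b,d} \<union> R \<notin> C"
    and eu: "{u} \<union> R \<in> C"
begin

lemma fc: "X \<in> C \<Longrightarrow> Y \<subseteq> X \<Longrightarrow> Y \<in> C" using sc_closed[OF sc] by blast
lemma nf: "X \<notin> C \<Longrightarrow> X \<subseteq> Y \<Longrightarrow> Y \<notin> C" using sc_closed[OF sc] by blast

lemma single: "{a} \<union> R \<in> C" "{b} \<union> R \<in> C" "{c} \<union> R \<in> C" "{d} \<union> R \<in> C"
proof -
  show "{a} \<union> R \<in> C" by (rule fc[OF eab]) auto
  show "{b} \<union> R \<in> C" by (rule fc[OF eab]) auto
  show "{c} \<union> R \<in> C" by (rule fc[OF ecd]) auto
  show "{d} \<union> R \<in> C" by (rule fc[OF ecd]) auto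
qed

lemma link_rule:
  assumes "distinct [x,y,z,u]" "{x,y,z} \<subseteq> V - R"
    and "{x,y} \<union> R \<in> C" "{x,z} \<union> R \<in> C" "{y,z} \<union> R \<notin> C" "{x,u} \<union> R \<in> C"
  shows "{x,y,u} \<union> R \<in> C \<or> {x,z,u} \<union> R \<in> C"
proof (rule ccontr)
  assume h: "\<not> ?thesis"
  have R': "insert x R \<in> C" by (rule fc[OF assms(3)]) auto
  show False
  proof (rule no_bd1[OF sc ba R', of y z u])
    show "distinct [y, z, u]" using assms(1) by auto
    show "{y, z, u} \<subseteq> V - insert x R" using assms(1,2) inV by auto
    show "{y} \<union> insert x R \<in> C" using assms(3) by (simp add: insert_commute)
    show "{z} \<union> insert x R \<in> C" using assms(4) by (simp add: insert_commute)
    show "{u} \<union> insert x R \<in> C" using assms(6) by (simp add: insert_commute)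
    show "{y, z} \<union> insert x R \<notin> C" by (rule nf[OF assms(5)]) auto
    show "{y, u} \<union> insert x R \<notin> C" using h by (simp add: insert_commute)
    show "{z, u} \<union> insert x R \<notin> C" using h by (simp add: insert_commute)
  qed
qed

lemma opp_rule:
  assumes "distinct [y,z,u]" "{y,z} \<subseteq> V - R"
    and "{y} \<union> R \<in> C" "{z} \<union> R \<in> C" "{y,z} \<union> R \<notin> C"
  shows "{u,y} \<union> R \<in> C \<or> {u,z} \<union> R \<in> C"
proof (rule ccontr)
  assume h: "\<not> ?thesis"
  show False
  proof (rule no_bd1[OF sc ba R, of y z u])
    show "distinct [y, z, u]" using assms(1) by auto
    show "{y, z, u} \<subseteq> V - R" using assms(2) inV by auto
  qed (use assms h eu in \<open>simp_all add: insert_commute\<close>)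
qed

lemma edge_abu_case:
  assumes abu: "{a,b,u} \<union> R \<in> C" and nud: "{u,d} \<union> R \<notin> C"
  shows False
proof (cases "{u,c} \<union> R \<in> C")
  case False
  show False
  proof (rule no_P4[OF sc ba R, of u b c d])
    show "distinct [u, b, c, d]" using dist by auto
    show "{u, b, c, d} \<subseteq> V - R" using inV by auto
    show "{u, b} \<union> R \<in> C" by (rule fc[OF abu]) auto
  qed (use ebc ecd False nud nbd in \<open>simp_all add: insert_commute\<close>)
next
  case True
  have "{c,b,u} \<union> R \<in> C \<or> {c,d,u} \<union> R \<in> C"
    by (rule link_rule) (use dist inV ebc ecd nbd True in \<open>auto simp: insert_commute\<close>)
  moreover have "{c,d,u} \<union> R \<notin> C" by (rule nf[OF nud]) auto
  ultimately have cbu: "{c,b,u} \<union> R \<in> C" by blast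
  show False
  proof (rule no_J1[OF sc ba R, of d a b u c])
    show "distinct [d, a, b, u, c]" using dist by auto
    show "{d, a, b, u, c} \<subseteq> V - R" using inV by auto
  qed (use eda ecd abu cbu nbd nud nac in \<open>simp_all add: insert_commute\<close>)
qed

end

lemma sq_rot: "sq V C R a b c d u \<Longrightarrow> sq V C R b c d a u"
  unfolding sq_def by (auto simp: insert_commute)
lemma sq_refl: "sq V C R a b c d u \<Longrightarrow> sq V C R c b a d u"
  unfolding sq_def by (auto simp: insert_commute)

context sq begin

lemma u_adj_d: "{u,d} \<union> R \<in> C"
proof (rule ccontr)
  assume nud: "{u,d} \<union> R \<notin> C"
  have "{u,b} \<union> R \<in> C \<or> {u,d} \<union> R \<in> C"
    by (rule opp_rule) (use dist inV single nbd in auto)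
  with nud have ub: "{u,b} \<union> R \<in> C" by blast
  have "{b,a,u} \<union> R \<in> C \<or> {b,c,u} \<union> R \<in> C"
    by (rule link_rule) (use dist inV eab ebc nac ub in \<open>auto simp: insert_commute\<close>)
  then show False
  proof
    assume "{b,a,u} \<union> R \<in> C"
    then show False using edge_abu_case nud by (simp add: insert_commute)
  next
    assume "{b,c,u} \<union> R \<in> C"
    then show False using sq.edge_abu_case[OF sq_refl[OF sq_axioms]] nud by (simp add: insert_commute)
  qed
qed

end


context sq begin

lemma u_adj: "{u,a} \<union> R \<in> C" "{u,b} \<union> R \<in> C" "{u,c} \<union> R \<in> C" "{u,d} \<union> R \<in> C"
proof -
  have r1: "sq V C R b c d a u" by (rule sq_rot[OF sq_axioms])
  have r2: "sq V C R c d a b u" by (rule sq_rot[OF r1])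
  have r3: "sq V C R d a b c u" by (rule sq_rot[OF r2])
  show "{u,a} \<union> R \<in> C" by (rule sq.u_adj_d[OF r1])
  show "{u,b} \<union> R \<in> C" by (rule sq.u_adj_d[OF r2])
  show "{u,c} \<union> R \<in> C" by (rule sq.u_adj_d[OF r3])
  show "{u,d} \<union> R \<in> C" by (rule u_adj_d)
qed

lemma tri_abu: "{a,b,u} \<union> R \<in> C"
proof (rule ccontr)
  assume nabu: "{a,b,u} \<union> R \<notin> C"
  have "{a,b,u} \<union> R \<in> C \<or> {a,d,u} \<union> R \<in> C"
    by (rule link_rule) (use dist inV eab eda nbd u_adj in \<open>auto simp: insert_commute\<close>)
  with nabu have adu: "{a,d,u} \<union> R \<in> C" by blast
  have "{b,a,u} \<union> R \<in> C \<or> {b,c,u} \<union> R \<in> C"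
    by (rule link_rule) (use dist inV eab ebc nac u_adj in \<open>auto simp: insert_commute\<close>)
  with nabu have bcu: "{b,c,u} \<union> R \<in> C" by (auto simp: insert_commute)
  show False
  proof (cases "{c,d,u} \<union> R \<in> C")
    case True
    have R': "insert u R \<in> C" using eu by simp
    show False
    proof (rule no_P4[OF sc ba R', of a d c b])
      show "distinct [a, d, c, b]" using dist by auto
      show "{a, d, c, b} \<subseteq> V - insert u R" using inV dist by auto
      show "{a, c} \<union> insert u R \<notin> C" by (rule nf[OF nac]) auto
      show "{d, b} \<union> insert u R \<notin> C" by (rule nf[OF nbd]) auto
    qed (use adu True bcu nabu in \<open>simp_all add: insert_commute\<close>)
  next
    case False
    show False
    proof (rule no_J2[OF sc ba R, of a b c d u])
      show "distinct [a, b, c, d, u]" using dist by auto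
      show "{a, b, c, d, u} \<subseteq> V - R" using inV by auto
    qed (use eab bcu ecd adu nac nbd nabu False in \<open>simp_all add: insert_commute\<close>)
  qed
qed

lemma tris: "{a,b,u} \<union> R \<in> C" "{b,c,u} \<union> R \<in> C" "{c,d,u} \<union> R \<in> C" "{d,a,u} \<union> R \<in> C"
proof -
  have r1: "sq V C R b c d a u" by (rule sq_rot[OF sq_axioms])
  have r2: "sq V C R c d a b u" by (rule sq_rot[OF r1])
  have r3: "sq V C R d a b c u" by (rule sq_rot[OF r2])
  show "{a,b,u} \<union> R \<in> C" by (rule tri_abu)
  show "{b,c,u} \<union> R \<in> C" by (rule sq.tri_abu[OF r1])
  show "{c,d,u} \<union> R \<in> C" by (rule sq.tri_abu[OF r2])
  show "{d,a,u} \<union> R \<in> C" by (rule sq.tri_abu[OF r3])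
qed

lemma cone_two:
  assumes w: "w \<notin> {a,b,c,d,u}" "w \<in> V - R"
    and wf: "{a,b,w} \<union> R \<in> C" "{b,c,w} \<union> R \<in> C" "{c,d,w} \<union> R \<in> C" "{d,a,w} \<union> R \<in> C"
  shows "{a,b,u,w} \<union> R \<in> C" "{b,c,u,w} \<union> R \<in> C" "{c,d,u,w} \<union> R \<in> C" "{d,a,u,w} \<union> R \<in> C"
proof -
  have uw: "{u,w} \<union> R \<in> C"
  proof (rule ccontr)
    assume nuw: "{u,w} \<union> R \<notin> C"
    show False
    proof (rule no_O6[OF sc ba R, of a c b d u w])
      show "distinct [a, c, b, d, u, w]" using dist w by auto
      show "{a, c, b, d, u, w} \<subseteq> V - R" using inV w by auto
    qed (use tris wf nac nbd nuw in \<open>simp_all add: insert_commute\<close>)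
  qed
  have "sq V C (insert u R) a b c d w"
    unfolding sq_def
  proof (intro conjI)
    show "insert u R \<in> C" using eu by simp
    show "distinct [a, b, c, d, w]" using dist w by auto
    show "{a, b, c, d, w} \<subseteq> V - insert u R" using inV dist w by auto
    show "{a, c} \<union> insert u R \<notin> C" by (rule nf[OF nac]) auto
    show "{b, d} \<union> insert u R \<notin> C" by (rule nf[OF nbd]) auto
  qed (use sc ba tris uw in \<open>simp_all add: insert_commute\<close>)
  from sq.tris[OF this]
  show "{a,b,u,w} \<union> R \<in> C" "{b,c,u,w} \<union> R \<in> C" "{c,d,u,w} \<union> R \<in> C" "{d,a,u,w} \<union> R \<in> C"
    by (simp_all add: insert_commute)
qed

end


lemma C4_mem: "G \<in> C4 \<longleftrightarrow> G \<subseteq> {1,2} \<or> G \<subseteq> {2,3} \<or> G \<subseteq> {3,4} \<or> G \<subseteq> {1,4}"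
  unfolding C4_def gen_def by auto

lemma cone_mem: "G \<in> cone_C4 p \<longleftrightarrow> G \<subseteq> {1,2} \<union> {5..4+p} \<or> G \<subseteq> {2,3} \<union> {5..4+p} \<or>
    G \<subseteq> {3,4} \<union> {5..4+p} \<or> G \<subseteq> {1,4} \<union> {5..4+p}"
  unfolding cone_C4_def gen_def by blast

theorem proposition4p4:
  fixes V :: "'a set" and C :: "'a set set"
  assumes "simplicial_complex V C"
    and "beta_avoiding V C"
    and "\<exists>W\<subseteq>V. cx_iso W (induced C W) {1..4} C4"
  shows "\<exists>p::nat. cx_iso (non_ghost V C) (induced C (non_ghost V C)) {1..4+p} (cone_C4 p)"
proof -
  note sc = assms(1) and ba = assms(2)
  have finV: "finite V" using sc unfolding simplicial_complex_def by blast
  obtain W h where WV: "W \<subseteq> V" and hb: "bij_betw h W {1..4}"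
    and hC0: "\<And>F. F \<subseteq> W \<Longrightarrow> (F \<in> induced C W \<longleftrightarrow> h ` F \<in> C4)"
    using assms(3) unfolding cx_iso_def by blast
  have hC: "\<And>F. F \<subseteq> W \<Longrightarrow> (F \<in> C \<longleftrightarrow> h ` F \<in> C4)" using hC0 unfolding induced_def by auto
  have hinj: "inj_on h W" and hW: "h ` W = {1..4}" using hb unfolding bij_betw_def by auto
  define hi where "hi = the_inv_into W h"
  define a where "a = hi 1"
  define b where "b = hi 2"
  define c where "c = hi 3"
  define d where "d = hi 4"
  have hiW: "\<And>y. y \<in> {1..4} \<Longrightarrow> hi y \<in> W" unfolding hi_def using hinj hW
    by (metis subset_refl the_inv_into_into)
  have hhi: "\<And>y. y \<in> {1..4} \<Longrightarrow> h (hi y) = y" unfolding hi_def using hinj hW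
    by (metis f_the_inv_into_f)
  have hih: "\<And>x. x \<in> W \<Longrightarrow> hi (h x) = x" unfolding hi_def using hinj
    by (metis the_inv_into_f_f)
  have abcdW: "a \<in> W" "b \<in> W" "c \<in> W" "d \<in> W" unfolding a_def b_def c_def d_def by (auto intro: hiW)
  have hv: "h a = 1" "h b = 2" "h c = 3" "h d = 4" unfolding a_def b_def c_def d_def by (auto simp: hhi)
  have Weq: "W = {a,b,c,d}"
  proof
    show "{a,b,c,d} \<subseteq> W" using abcdW by auto
    show "W \<subseteq> {a,b,c,d}"
    proof
      fix x assume x: "x \<in> W"
      then have "h x \<in> {1..4}" using hW by blast
      then have "h x \<in> {1,2,3,4}" by (simp only: I4)
      moreover have "x = hi (h x)" using hih[OF x] by simp
      ultimately show "x \<in> {a,b,c,d}" unfolding a_def b_def c_def d_def by auto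
    qed
  qed
  have dist: "distinct [a,b,c,d]" using hv by auto
  have fab: "{a,b} \<in> C" using hC[of "{a,b}"] abcdW hv by (simp add: C4_mem)
  have fbc: "{b,c} \<in> C" using hC[of "{b,c}"] abcdW hv by (simp add: C4_mem)
  have fcd: "{c,d} \<in> C" using hC[of "{c,d}"] abcdW hv by (simp add: C4_mem)
  have fda: "{d,a} \<in> C" using hC[of "{d,a}"] abcdW hv by (simp add: C4_mem)
  have nac: "{a,c} \<notin> C" using hC[of "{a,c}"] abcdW hv by (simp add: C4_mem)
  have nbd: "{b,d} \<notin> C" using hC[of "{b,d}"] abcdW hv by (simp add: C4_mem)
  define N where "N = non_ghost V C"
  define U where "U = N - W"
  have NV: "N \<subseteq> V" unfolding N_def non_ghost_def by auto
  have UV: "U \<subseteq> V" using NV unfolding U_def by auto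
  have finU: "finite U" using finV UV finite_subset by blast
  have UW: "U \<inter> W = {}" unfolding U_def by auto
  have Using: "\<And>u. u \<in> U \<Longrightarrow> {u} \<in> C" unfolding U_def N_def non_ghost_def by auto
  have WN: "W \<subseteq> N"
  proof -
    have "{x} \<in> C" if "x \<in> W" for x
    proof -
      have "x \<in> {a,b,c,d}" using that Weq by simp
      then show ?thesis using sc_closed[OF sc fab, of "{x}"] sc_closed[OF sc fcd, of "{x}"] by auto
    qed
    then show ?thesis unfolding N_def non_ghost_def using WV by auto
  qed
  have nsup: "\<And>Y. {a,c} \<union> Y \<notin> C" "\<And>Y. {b,d} \<union> Y \<notin> C"
  proof -
    fix Y show "{a,c} \<union> Y \<notin> C"
    proof
      assume "{a,c} \<union> Y \<in> C"
      then have "{a,c} \<in> C" by (rule sc_closed[OF sc]) auto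
      with nac show False by simp
    qed
  next
    fix Y show "{b,d} \<union> Y \<notin> C"
    proof
      assume "{b,d} \<union> Y \<in> C"
      then have "{b,d} \<in> C" by (rule sc_closed[OF sc]) auto
      with nbd show False by simp
    qed
  qed
  have abcdV: "{a,b,c,d} \<subseteq> V" using abcdW WV by auto
  define P where "P X \<longleftrightarrow> {a,b} \<union> X \<in> C \<and> {b,c} \<union> X \<in> C \<and> {c,d} \<union> X \<in> C \<and> {d,a} \<union> X \<in> C" for X
  have Kn: "\<forall>X. card X = n \<longrightarrow> X \<subseteq> U \<longrightarrow> P X" for n
  proof (induction n rule: less_induct)
    case (less n)
    show ?case
    proof (intro allI impI)
      fix X assume cX: "card X = n" and XU: "X \<subseteq> U"
      have finX: "finite X" using finU XU finite_subset by blast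
      have IH: "P Y" if "Y \<subset> X" for Y
      proof -
        have "card Y < n" using psubset_card_mono[OF finX that] cX by simp
        moreover have "Y \<subseteq> U" using that XU by auto
        ultimately show ?thesis using less.IH by blast
      qed
      show "P X"
      proof (cases "\<exists>u w. u \<in> X \<and> w \<in> X \<and> u \<noteq> w")
        case True
        then obtain u w where uw: "u \<in> X" "w \<in> X" "u \<noteq> w" by blast
        define Y where "Y = X - {u,w}"
        have Xu: "X - {w} = insert u Y" using uw unfolding Y_def by blast
        have Xw: "X - {u} = insert w Y" using uw unfolding Y_def by blast
        have XY: "X = insert u (insert w Y)" using uw unfolding Y_def by blast
        have P1: "P (insert u Y)" unfolding Xu[symmetric] by (rule IH) (use uw in auto)
        have P2: "P (insert w Y)" unfolding Xw[symmetric] by (rule IH) (use uw in auto)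
        have uU: "u \<in> U" "w \<in> U" using uw XU by auto
        have YU: "Y \<subseteq> U" "u \<notin> Y" "w \<notin> Y" using XU unfolding Y_def by auto
        have P1': "{a,b,u} \<union> Y \<in> C" "{b,c,u} \<union> Y \<in> C" "{c,d,u} \<union> Y \<in> C" "{d,a,u} \<union> Y \<in> C"
          using P1 unfolding P_def by (simp_all add: insert_commute)
        have P2': "{a,b,w} \<union> Y \<in> C" "{b,c,w} \<union> Y \<in> C" "{c,d,w} \<union> Y \<in> C" "{d,a,w} \<union> Y \<in> C"
          using P2 unfolding P_def by (simp_all add: insert_commute)
        have s: "sq V C Y a b c d u"
          unfolding sq_def
        proof (intro conjI)
          show "Y \<in> C" by (rule sc_closed[OF sc P1'(1)]) auto
          show "distinct [a,b,c,d,u]" using dist uU UW Weq by auto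
          show "{a,b,c,d,u} \<subseteq> V - Y" using abcdV uU UV YU UW Weq by auto
          show "{a,b} \<union> Y \<in> C" by (rule sc_closed[OF sc P1'(1)]) auto
          show "{b,c} \<union> Y \<in> C" by (rule sc_closed[OF sc P1'(2)]) auto
          show "{c,d} \<union> Y \<in> C" by (rule sc_closed[OF sc P1'(3)]) auto
          show "{d,a} \<union> Y \<in> C" by (rule sc_closed[OF sc P1'(4)]) auto
          show "{u} \<union> Y \<in> C" by (rule sc_closed[OF sc P1'(1)]) auto
        qed (use sc ba nsup in auto)
        have wn: "w \<notin> {a,b,c,d,u}" using uU UW Weq uw by auto
        have wV: "w \<in> V - Y" using uU UV YU by auto
        note R = sq.cone_two[OF s wn wV P2']
        show "P X" unfolding P_def XY using R by (simp_all add: insert_commute)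
      next
        case False
        then have "X = {} \<or> (\<exists>u. X = {u})" by blast
        then show "P X"
        proof
          assume "X = {}" then show "P X" unfolding P_def using fab fbc fcd fda by simp
        next
          assume "\<exists>u. X = {u}"
          then obtain u where Xu: "X = {u}" by blast
          have uU: "u \<in> U" using XU Xu by auto
          have s: "sq V C {} a b c d u"
            unfolding sq_def
          proof (intro conjI)
            show "{} \<in> C" by (rule sc_closed[OF sc fab]) auto
            show "distinct [a,b,c,d,u]" using dist uU UW Weq by auto
            show "{a,b,c,d,u} \<subseteq> V - {}" using abcdV uU UV by auto
            show "{u} \<union> {} \<in> C" using Using[OF uU] by simp
          qed (use sc ba nsup fab fbc fcd fda in auto)
          note R = sq.tris[OF s]
          show "P X" unfolding P_def Xu using R by (simp_all add: insert_commute)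
        qed
      qed
    qed
  qed
  have K: "\<And>X. X \<subseteq> U \<Longrightarrow> P X" using Kn by blast
  define p where "p = card U"
  obtain k where kb: "bij_betw k U {0..<p}" using ex_bij_betw_finite_nat[OF finU] unfolding p_def by blast
  have kinj: "inj_on k U" and kU: "k ` U = {0..<p}" using kb unfolding bij_betw_def by auto
  define f where "f x = (if x \<in> W then h x else k x + 5)" for x
  have NWU: "N = W \<union> U" using WN unfolding U_def by auto
  have fW: "\<And>x. x \<in> W \<Longrightarrow> f x = h x" unfolding f_def by simp
  have fU: "\<And>x. x \<in> U \<Longrightarrow> f x = k x + 5" unfolding f_def using UW by auto
  have hle: "\<And>x. x \<in> W \<Longrightarrow> 1 \<le> h x \<and> h x \<le> 4" using hW by auto
  have kl: "\<And>x. x \<in> U \<Longrightarrow> k x < p" using kU by auto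
  have inj: "inj_on f N"
  proof (rule inj_onI)
    fix x y assume x: "x \<in> N" and y: "y \<in> N" and e: "f x = f y"
    show "x = y"
    proof (cases "x \<in> W")
      case True
      show ?thesis
      proof (cases "y \<in> W")
        case True
        then show ?thesis using \<open>x \<in> W\<close> e fW hinj by (metis inj_onD)
      next
        case False
        then have "y \<in> U" using y NWU by auto
        then show ?thesis using e fW[OF \<open>x \<in> W\<close>] fU[OF \<open>y \<in> U\<close>] hle[OF \<open>x \<in> W\<close>] by simp
      qed
    next
      case False
      then have xU: "x \<in> U" using x NWU by auto
      show ?thesis
      proof (cases "y \<in> W")
        case True
        then show ?thesis using e fW[OF \<open>y \<in> W\<close>] fU[OF xU] hle[OF \<open>y \<in> W\<close>] by simp
      next
        case False
        then have "y \<in> U" using y NWU by auto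
        then show ?thesis using xU e fU kinj by (metis add_right_cancel inj_onD)
      qed
    qed
  qed
  have img: "f ` N = {1..4+p}"
  proof
    show "f ` N \<subseteq> {1..4+p}"
    proof
      fix y assume "y \<in> f ` N"
      then obtain x where x: "x \<in> N" "y = f x" by blast
      show "y \<in> {1..4+p}"
      proof (cases "x \<in> W")
        case True then show ?thesis using x fW[OF True] hle[OF True] by auto
      next
        case False then have "x \<in> U" using x NWU by auto
        then show ?thesis using x fU[OF \<open>x \<in> U\<close>] kl[OF \<open>x \<in> U\<close>] by auto
      qed
    qed
  next
    show "{1..4+p} \<subseteq> f ` N"
    proof
      fix y assume y: "y \<in> {1..4+p}"
      show "y \<in> f ` N"
      proof (cases "y \<le> 4")
        case True
        then have y4: "y \<in> {1..4}" using y by auto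
        have "hi y \<in> W" "f (hi y) = y" using hiW[OF y4] fW hhi[OF y4] by auto
        then show ?thesis using NWU by (metis UnI1 imageI)
      next
        case False
        then have "y - 5 \<in> {0..<p}" using y by auto
        then obtain x where "x \<in> U" "k x = y - 5" using kU by (metis imageE)
        then have "f x = y" using fU False by auto
        then show ?thesis using \<open>x \<in> U\<close> NWU by (metis UnI2 imageI)
      qed
    qed
  qed
  have bij: "bij_betw f N {1..4+p}" unfolding bij_betw_def using inj img by blast
  have faces: "F \<in> induced C N \<longleftrightarrow> f ` F \<in> cone_C4 p" if FN: "F \<subseteq> N" for F
  proof -
    have "F \<in> induced C N \<longleftrightarrow> F \<in> C" unfolding induced_def using FN by auto
    also have "\<dots> \<longleftrightarrow> f ` F \<in> cone_C4 p"
    proof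
      assume FC: "F \<in> C"
      have FQ: "F \<inter> W \<in> C" by (rule sc_closed[OF sc FC]) auto
      then have "h ` (F \<inter> W) \<in> C4" using hC[of "F \<inter> W"] by auto
      then have cases: "h ` (F \<inter> W) \<subseteq> {1,2} \<or> h ` (F \<inter> W) \<subseteq> {2,3} \<or> h ` (F \<inter> W) \<subseteq> {3,4} \<or> h ` (F \<inter> W) \<subseteq> {1,4}"
        by (simp add: C4_mem)
      have fwd: "f ` F \<subseteq> e \<union> {5..4+p}" if "h ` (F \<inter> W) \<subseteq> e" for e
      proof
        fix y assume "y \<in> f ` F"
        then obtain x where x: "x \<in> F" "y = f x" by blast
        show "y \<in> e \<union> {5..4+p}"
        proof (cases "x \<in> W")
          case True then show ?thesis using x fW[OF True] that by auto
        next
          case False then have "x \<in> U" using x FN NWU by auto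
          then show ?thesis using x fU[OF \<open>x \<in> U\<close>] kl[OF \<open>x \<in> U\<close>] by auto
        qed
      qed
      show "f ` F \<in> cone_C4 p" unfolding cone_mem using cases fwd by blast
    next
      assume "f ` F \<in> cone_C4 p"
      then have cases: "f ` F \<subseteq> {1,2} \<union> {5..4+p} \<or> f ` F \<subseteq> {2,3} \<union> {5..4+p} \<or>
          f ` F \<subseteq> {3,4} \<union> {5..4+p} \<or> f ` F \<subseteq> {1,4} \<union> {5..4+p}" unfolding cone_mem .
      have bwd: "F \<subseteq> E \<union> U" if E: "E \<subseteq> W" and sub: "f ` F \<subseteq> h ` E \<union> {5..4+p}" for E
      proof
        fix x assume x: "x \<in> F"
        show "x \<in> E \<union> U"
        proof (cases "x \<in> W")
          case True
          then have "h x \<in> h ` E \<union> {5..4+p}" using sub x fW by (metis imageI subsetD)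
          moreover have "h x \<le> 4" using hle True by auto
          ultimately have "h x \<in> h ` E" by auto
          then obtain z where "z \<in> E" "h z = h x" by auto
          then have "z = x" using hinj E True by (metis inj_onD subsetD)
          then show ?thesis using \<open>z \<in> E\<close> by simp
        next
          case False then show ?thesis using x FN NWU by auto
        qed
      qed
      have KU: "P U" by (rule K) simp
      have e1: "h ` {a,b} = {1,2}" "h ` {b,c} = {2,3}" "h ` {c,d} = {3,4}" "h ` {d,a} = {1,4}"
        using hv by (auto simp: insert_commute)
      have Esub: "{a,b} \<subseteq> W" "{b,c} \<subseteq> W" "{c,d} \<subseteq> W" "{d,a} \<subseteq> W" using abcdW by auto
      from cases show "F \<in> C"
      proof (elim disjE)
        assume "f ` F \<subseteq> {1,2} \<union> {5..4+p}"
        then have "F \<subseteq> {a,b} \<union> U" by (rule bwd[OF Esub(1), unfolded e1(1)])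
        then show "F \<in> C" using sc_closed[OF sc] KU unfolding P_def by blast
      next
        assume "f ` F \<subseteq> {2,3} \<union> {5..4+p}"
        then have "F \<subseteq> {b,c} \<union> U" by (rule bwd[OF Esub(2), unfolded e1(2)])
        then show "F \<in> C" using sc_closed[OF sc] KU unfolding P_def by blast
      next
        assume "f ` F \<subseteq> {3,4} \<union> {5..4+p}"
        then have "F \<subseteq> {c,d} \<union> U" by (rule bwd[OF Esub(3), unfolded e1(3)])
        then show "F \<in> C" using sc_closed[OF sc] KU unfolding P_def by blast
      next
        assume "f ` F \<subseteq> {1,4} \<union> {5..4+p}"
        then have "F \<subseteq> {d,a} \<union> U" by (rule bwd[OF Esub(4), unfolded e1(4)])
        then show "F \<in> C" using sc_closed[OF sc] KU unfolding P_def by blast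
      qed
    qed
    finally show ?thesis .
  qed
  have "cx_iso N (induced C N) {1..4+p} (cone_C4 p)"
    unfolding cx_iso_def using bij faces by blast
  then show ?thesis unfolding N_def by blast
qed


end
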